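(* In the Dynamic Accountable Storage construction described in the context, with the server's IBLT tree built on the protected Cartesian tree, space usage is $O(\delta)$ at the client and $O(n+\delta n/\beta)$ at the server, where $n$ is the number of stored blocks.
   Context: The client stores $n$ key-block pairs at a server. The client keeps only an IBLT (Invertible Bloom Lookup Table: a table of $O(\delta)$ cells holding XOR-sums of keys, blocks and tags) of all her key-block-tag triples (her keys themselves are not counted). The server stores the $n$ key-block-tag triples and an IBLT tree: a protected Cartesian tree on the keys, in which each node stores an IBLT with $O(\delta)$ cells of all triples in its subtree. Protected Cartesian tree with parameter $\beta$: let $h'$ be a random hash from keys to $[0,1]$; for a set $S$ of $n'$ triples, the protected region $P(S)$ consists of elements whose rank (number of smaller keys in $S$) is $\le\beta/2$ or $>n'-\beta/2$, and $U(S)=S\setminus P(S)$; if $|S|\le\beta$ the tree is a single leaf holding $S$, otherwise the root pivot is the element of $U(S)$ with smallest $h'$ value and the subtrees are built recursively on the elements with smaller and larger keys. *)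

theory Defs
  imports Complex_Main
begin

text \<open>Keys are drawn from a linear order;
each stored key represents one key-block-tag triple (one unit of space).
An IBLT with c cells occupies c units of space.\<close>

datatype 'k ptree = Leaf "'k set" | Node "'k ptree" 'k "'k ptree"

definition krank :: "'k::linorder set \<Rightarrow> 'k \<Rightarrow> nat" where
  "krank S x = card {y \<in> S. y < x}"

definition protected_region :: "nat \<Rightarrow> 'k::linorder set \<Rightarrow> 'k set" where
  "protected_region \<beta> S = {x \<in> S. real (krank S x) \<le> real \<beta> / 2
       \<or> real (krank S x) > real (card S) - real \<beta> / 2}"

definition unprotected_region :: "nat \<Rightarrow> 'k::linorder set \<Rightarrow> 'k set" where
  "unprotected_region \<beta> S = S - protected_region \<beta> S"

lemma unprotected_subset: "unprotected_region \<beta> S \<subseteq> S"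
  unfolding unprotected_region_def by blast

function build_pct :: "nat \<Rightarrow> ('k::linorder \<Rightarrow> real) \<Rightarrow> 'k set \<Rightarrow> 'k ptree" where
  "build_pct \<beta> h S =
    (if \<not> finite S \<or> card S \<le> \<beta> \<or> unprotected_region \<beta> S = {} then Leaf S
     else (let p = arg_min_on h (unprotected_region \<beta> S) in
           Node (build_pct \<beta> h {x \<in> S. x < p}) p (build_pct \<beta> h {x \<in> S. p < x})))"
  by pat_completeness auto
termination
proof (relation "measure (\<lambda>(\<beta>, h, S). card S)", goal_cases)
  case 1 then show ?case by simp
next
  case (2 \<beta> h S p)
  have U: "finite (unprotected_region \<beta> S)"
    using 2 finite_subset[OF unprotected_subset] by blast
  have "p \<in> S" using 2 arg_min_if_finite(1)[OF U] unprotected_subset by blast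
  then have "{x \<in> S. x < p} \<subset> S" by auto
  then show ?case using 2 by (simp add: psubset_card_mono)
next
  case (3 \<beta> h S p)
  have U: "finite (unprotected_region \<beta> S)"
    using 3 finite_subset[OF unprotected_subset] by blast
  have "p \<in> S" using 3 arg_min_if_finite(1)[OF U] unprotected_subset by blast
  then have "{x \<in> S. p < x} \<subset> S" by auto
  then show ?case using 3 by (simp add: psubset_card_mono)
qed

text \<open>Space of the IBLT tree: every node (internal or leaf) stores an IBLT
with c cells; an internal node additionally stores its pivot, a leaf the
triples it holds.\<close>

fun iblt_tree_space :: "nat \<Rightarrow> 'k ptree \<Rightarrow> nat" where
  "iblt_tree_space c (Leaf A) = c + card A"
| "iblt_tree_space c (Node l p r) = c + 1 + iblt_tree_space c l + iblt_tree_space c r"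

text \<open>Server: the n triples plus the IBLT tree.  Client: one IBLT.\<close>

definition server_space :: "nat \<Rightarrow> nat \<Rightarrow> ('k::linorder \<Rightarrow> real) \<Rightarrow> 'k set \<Rightarrow> nat" where
  "server_space c \<beta> h S = card S + iblt_tree_space c (build_pct \<beta> h S)"

definition client_space :: "nat \<Rightarrow> nat" where
  "client_space c = c"

end

theory Submission
  imports Defs
begin

declare build_pct.simps[simp del]

fun nint :: "'k ptree \<Rightarrow> nat" where
  "nint (Leaf A) = 0"
| "nint (Node l p r) = 1 + nint l + nint r"

lemma pivot_props:
  fixes h :: "'k::linorder \<Rightarrow> real"
  assumes "finite S" "unprotected_region \<beta> S \<noteq> {}"
    "p = arg_min_on h (unprotected_region \<beta> S)"
  shows "p \<in> S" "real (card {x \<in> S. x < p}) > real \<beta> / 2"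
    "real (card {x \<in> S. x < p}) \<le> real (card S) - real \<beta> / 2"
proof -
  have U: "finite (unprotected_region \<beta> S)"
    using assms finite_subset[OF unprotected_subset] by blast
  have pU: "p \<in> unprotected_region \<beta> S" using arg_min_if_finite(1)[OF U assms(2)] assms(3) by metis
  then show "p \<in> S" using unprotected_subset by blast
  from pU show "real (card {x \<in> S. x < p}) > real \<beta> / 2"
    unfolding unprotected_region_def protected_region_def krank_def by auto
  from pU show "real (card {x \<in> S. x < p}) \<le> real (card S) - real \<beta> / 2"
    unfolding unprotected_region_def protected_region_def krank_def by auto
qed

lemma space_eq:
  "iblt_tree_space c (build_pct \<beta> h S) = c * (2 * nint (build_pct \<beta> h S) + 1) + card S"
proof (induction \<beta> h S rule: build_pct.induct)
  case (1 \<beta> h S)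
  show ?case
  proof (cases "\<not> finite S \<or> card S \<le> \<beta> \<or> unprotected_region \<beta> S = {}")
    case True
    then show ?thesis using build_pct.simps[of \<beta> h S] by simp
  next
    case False
    define p where "p = arg_min_on h (unprotected_region \<beta> S)"
    have pS: "p \<in> S" using pivot_props(1)[OF _ _ p_def] False by blast
    have fin: "finite S" using False by blast
    have rb: "real (card {x \<in> S. x < p}) \<le> real (card S) - real \<beta> / 2" using pivot_props(3)[OF _ _ p_def] False by blast
    have "S = insert p ({x \<in> S. x < p} \<union> {x \<in> S. p < x})" using pS by auto
    then have cS: "card S = 1 + card {x \<in> S. x < p} + card {x \<in> S. p < x}"
    proof -
      have "card S = card (insert p ({x \<in> S. x < p} \<union> {x \<in> S. p < x}))"
        using \<open>S = _\<close> by simp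
      also have "\<dots> = Suc (card ({x \<in> S. x < p} \<union> {x \<in> S. p < x}))"
        using fin by (intro card_insert_disjoint) auto
      also have "card ({x \<in> S. x < p} \<union> {x \<in> S. p < x}) = card {x \<in> S. x < p} + card {x \<in> S. p < x}"
        using fin by (intro card_Un_disjoint) auto
      finally show ?thesis by simp
    qed
    have IH1: "iblt_tree_space c (build_pct \<beta> h {x \<in> S. x < p}) =
       c * (2 * nint (build_pct \<beta> h {x \<in> S. x < p}) + 1) + card {x \<in> S. x < p}"
      using 1(1)[OF False p_def] .
    have IH2: "iblt_tree_space c (build_pct \<beta> h {x \<in> S. p < x}) =
       c * (2 * nint (build_pct \<beta> h {x \<in> S. p < x}) + 1) + card {x \<in> S. p < x}"
      using 1(2)[OF False p_def] .
    have B: "build_pct \<beta> h S = Node (build_pct \<beta> h {x \<in> S. x < p}) p (build_pct \<beta> h {x \<in> S. p < x})"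
      using False by (subst build_pct.simps) (simp add: p_def Let_def)
    show ?thesis unfolding B using IH1 IH2 cS by (simp add: algebra_simps)
  qed
qed

lemma aux_ineq:
  fixes x A B I1 I2 :: real
  assumes "x > 0" "A > 1" "1 \<le> x + B" "1 \<le> x + A" "I1 \<le> max 0 (A - 1)" "I2 \<le> max 0 (B - 1)"
  shows "1 + I1 + I2 \<le> x + A + B - 1"
  using assms by (cases "B \<le> 1") (simp_all add: max_def split: if_splits)

lemma nint_bound:
  assumes "\<beta> \<ge> 1"
  shows "real (nint (build_pct \<beta> h S)) \<le> max 0 (2 * real (card S) / real \<beta> - 1)"
  using assms
proof (induction \<beta> h S rule: build_pct.induct)
  case (1 \<beta> h S)
  show ?case
  proof (cases "\<not> finite S \<or> card S \<le> \<beta> \<or> unprotected_region \<beta> S = {}")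
    case True
    then show ?thesis using build_pct.simps[of \<beta> h S] by simp
  next
    case False
    define p where "p = arg_min_on h (unprotected_region \<beta> S)"
    have pS: "p \<in> S" using pivot_props(1)[OF _ _ p_def] False by blast
    have ra: "real (card {x \<in> S. x < p}) > real \<beta> / 2" using pivot_props(2)[OF _ _ p_def] False by blast
    have fin: "finite S" using False by blast
    have "S = insert p ({x \<in> S. x < p} \<union> {x \<in> S. p < x})" using pS by auto
    then have cS: "card S = 1 + card {x \<in> S. x < p} + card {x \<in> S. p < x}"
    proof -
      have "card S = card (insert p ({x \<in> S. x < p} \<union> {x \<in> S. p < x}))"
        using \<open>S = _\<close> by simp
      also have "\<dots> = Suc (card ({x \<in> S. x < p} \<union> {x \<in> S. p < x}))"
        using fin by (intro card_insert_disjoint) auto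
      also have "card ({x \<in> S. x < p} \<union> {x \<in> S. p < x}) = card {x \<in> S. x < p} + card {x \<in> S. p < x}"
        using fin by (intro card_Un_disjoint) auto
      finally show ?thesis by simp
    qed
    define a where "a = card {x \<in> S. x < p}"
    define b where "b = card {x \<in> S. p < x}"
    define I1 where "I1 = nint (build_pct \<beta> h {x \<in> S. x < p})"
    define I2 where "I2 = nint (build_pct \<beta> h {x \<in> S. p < x})"
    have IH1: "real I1 \<le> max 0 (2 * real a / real \<beta> - 1)"
      using 1(1)[OF False p_def] 1(3) unfolding I1_def a_def by blast
    have IH2: "real I2 \<le> max 0 (2 * real b / real \<beta> - 1)"
      using 1(2)[OF False p_def] 1(3) unfolding I2_def b_def by blast
    have B: "build_pct \<beta> h S = Node (build_pct \<beta> h {x \<in> S. x < p}) p (build_pct \<beta> h {x \<in> S. p < x})"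
      using False by (subst build_pct.simps) (simp add: p_def Let_def)
    have bpos: "real \<beta> > 0" using 1(3) by simp
    have mb: "real (card S) > real \<beta>" using False by simp
    have rb: "real a \<le> real (card S) - real \<beta> / 2" using pivot_props(3)[OF _ _ p_def] False unfolding a_def by blast
    have rb': "2 * (1 + real b) / real \<beta> \<ge> 1" using rb cS bpos unfolding a_def b_def by (simp add: field_simps)
    have ra'': "2 * (1 + real a) / real \<beta> \<ge> 1" using ra bpos unfolding a_def by (simp add: field_simps)
    have ra': "2 * real a / real \<beta> > 1" using ra bpos unfolding a_def[symmetric]
      by (simp add: field_simps)
    have cS': "real (card S) = 1 + real a + real b" using cS a_def b_def by simp
    have mb': "2 * real (card S) / real \<beta> > 2" using mb bpos by (simp add: field_simps)
    have key: "1 + real I1 + real I2 \<le> 2 * real (card S) / real \<beta> - 1"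
    proof -
      have e: "2 * real (card S) / real \<beta> = 2 / real \<beta> + 2 * real a / real \<beta> + 2 * real b / real \<beta>"
        using cS' by (simp add: add_divide_distrib algebra_simps)
      have "2 / real \<beta> > 0" using bpos by simp
      moreover have "2 * (1 + real b) / real \<beta> = 2 / real \<beta> + 2 * real b / real \<beta>"
        "2 * (1 + real a) / real \<beta> = 2 / real \<beta> + 2 * real a / real \<beta>" by (simp_all add: add_divide_distrib)
      ultimately show ?thesis using aux_ineq[OF _ ra' _ _ IH1 IH2, of "2 / real \<beta>"] rb' ra'' e by simp
    qed
    show ?thesis unfolding B using key I1_def I2_def by simp
  qed
qed

theorem lemma4:
  fixes ncells :: "nat \<Rightarrow> nat" and K :: nat
  assumes iblt_size: "\<forall>\<delta>\<ge>1. ncells \<delta> \<le> K * \<delta>"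
  shows "\<exists>C::real. C > 0 \<and>
    (\<forall>\<delta>::nat\<ge>1. real (client_space (ncells \<delta>)) \<le> C * real \<delta>) \<and>
    (\<forall>\<delta>::nat\<ge>1. \<forall>\<beta>::nat\<ge>1. \<forall>h::'k::linorder \<Rightarrow> real. (\<forall>x. h x \<in> {0..1}) \<longrightarrow>
       (\<forall>\<^sub>F n in sequentially. \<forall>S::'k set. finite S \<and> card S = n \<longrightarrow>
          real (server_space (ncells \<delta>) \<beta> h S)
            \<le> C * (real n + real \<delta> * real n / real \<beta>)))"
proof (rule exI[of _ "5 * real K + 2"], intro conjI allI impI)
  show "5 * real K + 2 > 0" by simp
next
  fix \<delta> :: nat assume d: "\<delta> \<ge> 1"
  have "real (ncells \<delta>) \<le> real K * real \<delta>" using iblt_size d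
    by (metis of_nat_le_iff of_nat_mult)
  also have "\<dots> \<le> (5 * real K + 2) * real \<delta>" by (intro mult_right_mono) auto
  finally show "real (client_space (ncells \<delta>)) \<le> (5 * real K + 2) * real \<delta>"
    by (simp add: client_space_def)
next
  fix \<delta> \<beta> :: nat and h :: "'k \<Rightarrow> real"
  assume d: "\<delta> \<ge> 1" and be: "\<beta> \<ge> 1"
  show "\<forall>\<^sub>F n in sequentially. \<forall>S::'k set. finite S \<and> card S = n \<longrightarrow>
          real (server_space (ncells \<delta>) \<beta> h S)
            \<le> (5 * real K + 2) * (real n + real \<delta> * real n / real \<beta>)"
    unfolding eventually_sequentially
  proof (intro exI[of _ \<beta>] allI impI)
    fix n and S :: "'k set" assume nb: "n \<ge> \<beta>" and S: "finite S \<and> card S = n"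
    define c where "c = ncells \<delta>"
    define I where "I = nint (build_pct \<beta> h S)"
    have c: "real c \<le> real K * real \<delta>" using iblt_size d unfolding c_def
      by (metis of_nat_le_iff of_nat_mult)
    have bpos: "real \<beta> > 0" using be by simp
    have I: "real I \<le> 2 * real n / real \<beta>"
    proof -
      have "real I \<le> max 0 (2 * real (card S) / real \<beta> - 1)"
        using nint_bound[OF be, of h S] unfolding I_def .
      moreover have "0 \<le> 2 * real n / real \<beta>" by simp
      ultimately show ?thesis using S by (simp add: max_def split: if_splits)
    qed
    have one: "1 \<le> real n / real \<beta>" using nb bpos by (simp add: field_simps)
    have sp: "real (server_space c \<beta> h S) = 2 * real n + real c * (2 * real I + 1)"
      unfolding server_space_def space_eq I_def using S by (simp add: algebra_simps)
    have "2 * real I + 1 \<le> 5 * (real n / real \<beta>)" using I one by simp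
    then have "real c * (2 * real I + 1) \<le> real K * real \<delta> * (5 * (real n / real \<beta>))"
      using c by (intro mult_mono) auto
    then have "real (server_space c \<beta> h S) \<le> 2 * real n + 5 * real K * (real \<delta> * real n / real \<beta>)"
      using sp by (simp add: algebra_simps)
    also have "\<dots> \<le> (5 * real K + 2) * (real n + real \<delta> * real n / real \<beta>)"
    proof -
      have "0 \<le> real \<delta> * real n / real \<beta>" by simp
      then show ?thesis by (simp add: algebra_simps mult_nonneg_nonneg)
    qed
    finally show "real (server_space (ncells \<delta>) \<beta> h S)
            \<le> (5 * real K + 2) * (real n + real \<delta> * real n / real \<beta>)" unfolding c_def .
  qed
qed

end
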